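(* The monoid variety $\mathbf A_0^1\vee\mathbb M_\lambda(ata^+)$ satisfies an identity $\mathbf u\approx\mathbf v$ if and only if all of the following hold: (a) $\mathrm{simp}(\mathbf u)=\mathrm{simp}(\mathbf v)$ and $\mathrm{mul}(\mathbf u)=\mathrm{mul}(\mathbf v)$; (b) for all letters $x,y$ occurring in $\mathbf u$, the first occurrence of $x$ precedes the last occurrence of $y$ in $\mathbf u$ if and only if the first occurrence of $x$ precedes the last occurrence of $y$ in $\mathbf v$; (c) for every $t\in\mathrm{simp}(\mathbf u)$ and $x\in\mathrm{mul}(\mathbf u)$, the occurrence of $t$ precedes the first occurrence of $x$ in $\mathbf u$ iff it does so in $\mathbf v$, and the occurrence of $t$ precedes the second occurrence of $x$ in $\mathbf u$ iff it does so in $\mathbf v$.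
   Context: Words are elements of the free monoid $\mathfrak A^*$ over a countably infinite alphabet; $\mathrm{simp}(\mathbf w)$ and $\mathrm{mul}(\mathbf w)$ are the sets of letters occurring exactly once, respectively at least twice, in $\mathbf w$. $A_0=\langle e,f\mid e^2=e,\ f^2=f,\ fe=0\rangle=\{e,f,ef,0\}$, $A_0^1$ is $A_0$ with an identity adjoined, and $\mathbf A_0^1$ is the monoid variety it generates. Let $\tau_1$ be the congruence on $\mathfrak A^*$ generated by $a=aa$ for letters $a$; $\mathbf u\,\lambda\,\mathbf v$ iff $\mathbf u\,\tau_1\,\mathbf v$, $\mathrm{mul}(\mathbf u)=\mathrm{mul}(\mathbf v)$, and for each multiple letter its first two occurrences are adjacent in $\mathbf u$ iff adjacent in $\mathbf v$. For $\lambda$-classes, $\mathtt v\le\mathtt u$ iff $\mathtt u=\mathtt p\mathtt v\mathtt s$ in $\mathfrak A^*/\lambda$; for a set $\mathtt W$ of classes, $M_\lambda(\mathtt W)$ is the Rees quotient of $\mathfrak A^*/\lambda$ by the ideal of classes not $\le$ any element of $\mathtt W$, and $\mathbb M_\lambda(\mathtt W)$ the variety it generates. $ata^+$ denotes the $\lambda$-class $\{ata^k:k\ge1\}$. $\vee$ is the join of varieties. *)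

theory Defs
  imports Main
begin

type_synonym word = "nat list"

definition simp_letters :: "word \<Rightarrow> nat set" where
  "simp_letters w = {x. count_list w x = 1}"

definition mul_letters :: "word \<Rightarrow> nat set" where
  "mul_letters w = {x. count_list w x \<ge> 2}"

definition first_occ :: "word \<Rightarrow> nat \<Rightarrow> nat" where
  "first_occ w x = (LEAST i. i < length w \<and> w ! i = x)"

definition second_occ :: "word \<Rightarrow> nat \<Rightarrow> nat" where
  "second_occ w x = (LEAST i. first_occ w x < i \<and> i < length w \<and> w ! i = x)"

definition last_occ :: "word \<Rightarrow> nat \<Rightarrow> nat" where
  "last_occ w x = (GREATEST i. i < length w \<and> w ! i = x)"

definition eval_word :: "('m \<Rightarrow> 'm \<Rightarrow> 'm) \<Rightarrow> 'm \<Rightarrow> (nat \<Rightarrow> 'm) \<Rightarrow> word \<Rightarrow> 'm" where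
  "eval_word mult one \<phi> w = foldr (\<lambda>a acc. mult (\<phi> a) acc) w one"

definition monoid_satisfies ::
  "'m set \<Rightarrow> ('m \<Rightarrow> 'm \<Rightarrow> 'm) \<Rightarrow> 'm \<Rightarrow> word \<Rightarrow> word \<Rightarrow> bool" where
  "monoid_satisfies C mult one u v \<longleftrightarrow>
     (\<forall>\<phi>. range \<phi> \<subseteq> C \<longrightarrow> eval_word mult one \<phi> u = eval_word mult one \<phi> v)"

datatype A01 = One | E | F | EF | Z

fun a01_mult :: "A01 \<Rightarrow> A01 \<Rightarrow> A01" where
  "a01_mult One y = y"
| "a01_mult x One = x"
| "a01_mult Z y = Z"
| "a01_mult x Z = Z"
| "a01_mult E E = E"
| "a01_mult E F = EF"
| "a01_mult E EF = EF"
| "a01_mult F E = Z"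
| "a01_mult F F = F"
| "a01_mult F EF = Z"
| "a01_mult EF E = Z"
| "a01_mult EF F = EF"
| "a01_mult EF EF = Z"

inductive tau1 :: "word \<Rightarrow> word \<Rightarrow> bool" where
  refl: "tau1 w w"
| dup: "tau1 (p @ [a] @ s) (p @ [a, a] @ s)"
| sym: "tau1 u v \<Longrightarrow> tau1 v u"
| trans: "tau1 u v \<Longrightarrow> tau1 v w \<Longrightarrow> tau1 u w"

definition first_two_adjacent :: "word \<Rightarrow> nat \<Rightarrow> bool" where
  "first_two_adjacent w x \<longleftrightarrow> (\<exists>p s. w = p @ [x, x] @ s \<and> x \<notin> set p)"

definition lam :: "word \<Rightarrow> word \<Rightarrow> bool" where
  "lam u v \<longleftrightarrow> tau1 u v \<and> mul_letters u = mul_letters v \<and>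
     (\<forall>x\<in>mul_letters u. first_two_adjacent u x \<longleftrightarrow> first_two_adjacent v x)"

definition lclass :: "word \<Rightarrow> word set" where
  "lclass w = {w'. lam w w'}"

text \<open>[v] \<le> [u] iff [u] = [p][v][s] in the quotient A*/lambda (lambda is a congruence).\<close>
definition lfactor :: "word \<Rightarrow> word \<Rightarrow> bool" where
  "lfactor v u \<longleftrightarrow> (\<exists>p s. lam u (p @ v @ s))"

text \<open>M_lambda(W) for a set W of representatives of lambda-classes: nonzero elements
  are (Some) lambda-classes below some element of W; None is the zero.\<close>
definition Mlam_carrier :: "word set \<Rightarrow> word set option set" where
  "Mlam_carrier W = insert None (Some ` {lclass w | w. \<exists>w0\<in>W. lfactor w w0})"

fun Mlam_mult :: "word set \<Rightarrow> word set option \<Rightarrow> word set option \<Rightarrow> word set option" where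
  "Mlam_mult W (Some X) (Some Y) =
     (let w = (SOME x. x \<in> X) @ (SOME y. y \<in> Y)
      in if \<exists>w0\<in>W. lfactor w w0 then Some (lclass w) else None)"
| "Mlam_mult W _ _ = None"

definition Mlam_one :: "word set option" where
  "Mlam_one = Some (lclass [])"

text \<open>The lambda-class ata^+ (a = 0, t = 1).\<close>
definition ata_word :: word where
  "ata_word = [0, 1, 0]"

text \<open>Identities of a join of varieties are those holding in both (Birkhoff).\<close>
definition join_A01_Mata_satisfies :: "word \<Rightarrow> word \<Rightarrow> bool" where
  "join_A01_Mata_satisfies u v \<longleftrightarrow>
     monoid_satisfies UNIV a01_mult One u v \<and>
     monoid_satisfies (Mlam_carrier {ata_word}) (Mlam_mult {ata_word}) Mlam_one u v"

end

theory Submission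
  imports Defs
begin

datatype N = N1 | NA | NA2 | NT | NAT | NTA | NTA2 | NATA | NZ

fun kap :: "word \<Rightarrow> N" where
  "kap [] = N1"
| "kap (0 # r) = (if \<forall>x\<in>set r. x = 0 then (if r = [] then NA else NA2)
     else if r \<noteq> [] \<and> hd r = 1 \<and> (\<forall>x\<in>set (tl r). x = 0) then (if tl r = [] then NAT else NATA) else NZ)"
| "kap (Suc 0 # r) = (if \<forall>x\<in>set r. x = 0 then (if r = [] then NT else if tl r = [] then NTA else NTA2) else NZ)"
| "kap (Suc (Suc n) # r) = NZ"

fun rep :: "N \<Rightarrow> word" where
  "rep N1 = []" | "rep NA = [0]" | "rep NA2 = [0,0]" | "rep NT = [1]" | "rep NAT = [0,1]"
| "rep NTA = [1,0]" | "rep NTA2 = [1,0,0]" | "rep NATA = [0,1,0]" | "rep NZ = [1,1]"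

fun nmult :: "N \<Rightarrow> N \<Rightarrow> N" where
  "nmult NZ y = NZ"
| "nmult x NZ = NZ"
| "nmult x y = kap (rep x @ rep y)"

lemma nmult_assoc: "nmult (nmult x y) z = nmult x (nmult y z)"
  by (cases x; cases y; cases z; simp)

lemma nmult_one[simp]: "nmult N1 y = y" "nmult y N1 = y"
  by (cases y; simp)+

definition shp :: "word \<Rightarrow> bool" where
 "shp w \<longleftrightarrow> (\<exists>j. w = replicate j 0) \<or> (\<exists>j. w = 1 # replicate j 0) \<or> (\<exists>j. w = 0 # 1 # replicate j 0)"

lemma kap_rep0: "kap (replicate j 0) = (if j = 0 then N1 else if j = 1 then NA else NA2)"
  by (cases j; cases "j - 1") auto
lemma kap_rep1: "kap (Suc 0 # replicate j 0) = (if j = 0 then NT else if j = 1 then NTA else NTA2)"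
  by (cases j; cases "j - 1") auto
lemma kap_rep01: "kap (0 # Suc 0 # replicate j 0) = (if j = 0 then NAT else NATA)"
  by (cases j) auto

lemma all_eq_rep: "\<forall>x\<in>set w. x = a \<Longrightarrow> w = replicate (length w) a"
  by (simp add: replicate_length_same)

lemma kap_shp: "kap w \<noteq> NZ \<longleftrightarrow> shp w"
proof
  assume "shp w" thus "kap w \<noteq> NZ" unfolding shp_def
    by (elim disjE exE) (simp_all add: kap_rep0 kap_rep1 kap_rep01)
next
  assume k: "kap w \<noteq> NZ"
  show "shp w"
  proof (cases w)
    case Nil thus ?thesis unfolding shp_def by (metis replicate_0)
  next
    case (Cons a r)
    show ?thesis
    proof (cases a)
      case 0
      show ?thesis
      proof (cases "\<forall>x\<in>set r. x = 0")
        case True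
        hence "w = replicate (Suc (length r)) 0" using Cons 0 all_eq_rep by simp
        thus ?thesis unfolding shp_def by blast
      next
        case False
        with k Cons 0 obtain r' where "r = Suc 0 # r'" "\<forall>x\<in>set r'. x = 0"
          by (cases r) (auto split: if_splits)
        hence "w = 0 # Suc 0 # replicate (length r') 0" using Cons 0 all_eq_rep by metis
        thus ?thesis unfolding shp_def by auto
      qed
    next
      case (Suc b)
      with k Cons have "b = 0" "\<forall>x\<in>set r. x = 0" by (cases b; auto split: if_splits)+
      hence "w = Suc 0 # replicate (length r) 0" using Cons Suc all_eq_rep by metis
      thus ?thesis unfolding shp_def by auto
    qed
  qed
qed

lemma count_rep[simp]: "count_list (replicate n a) x = (if x = a then n else 0)"
  by (induction n) auto

lemma rep_app_cons: "replicate j a @ a # s = a # replicate j a @ s"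
  by (induction j) auto

lemma tau1_remdups: "tau1 u v \<Longrightarrow> remdups_adj u = remdups_adj v"
proof (induction rule: tau1.induct)
  case (dup p a s)
  have "remdups_adj (p @ a # s) = remdups_adj (p @ [a]) @ tl (remdups_adj (a # s))"
    by (rule remdups_adj_append)
  moreover have "remdups_adj (p @ a # a # s) = remdups_adj (p @ [a]) @ tl (remdups_adj (a # a # s))"
    by (rule remdups_adj_append)
  ultimately show ?case by simp
qed auto

lemma tau1_block1: "tau1 (p @ [a] @ s) (p @ replicate (Suc j) a @ s)"
proof (induction j)
  case 0 thus ?case by (simp add: tau1.refl)
next
  case (Suc j)
  have "tau1 ((p @ replicate j a) @ [a] @ s) ((p @ replicate j a) @ [a, a] @ s)" by (rule tau1.dup)
  hence "tau1 (p @ replicate (Suc j) a @ s) (p @ replicate (Suc (Suc j)) a @ s)"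
    by (simp add: rep_app_cons)
  with Suc show ?case by (rule tau1.trans)
qed

lemma tau1_block: "tau1 (p @ replicate (Suc i) a @ s) (p @ replicate (Suc j) a @ s)"
  by (meson tau1.sym tau1.trans tau1_block1)

lemma lam_refl: "lam u u"
  unfolding lam_def by (simp add: tau1.refl)

lemma lam_sym: "lam u v \<Longrightarrow> lam v u"
  unfolding lam_def by (auto intro: tau1.sym)

lemma lam_trans: "lam u v \<Longrightarrow> lam v w \<Longrightarrow> lam u w"
  unfolding lam_def by (auto intro: tau1.trans)

lemma lclass_eq: "lam r r' \<Longrightarrow> lclass r = lclass r'"
  unfolding lclass_def using lam_sym lam_trans by blast

lemma not_adj01: "\<not> first_two_adjacent (0 # Suc 0 # replicate i 0) 0"
proof
  assume "first_two_adjacent (0 # Suc 0 # replicate i 0) 0"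
  then obtain p s where e: "0 # Suc 0 # replicate i 0 = p @ [0, 0] @ s" and "0 \<notin> set p"
    unfolding first_two_adjacent_def by blast
  thus False by (cases p) auto
qed

lemma adj_rep: "first_two_adjacent (q @ replicate (Suc (Suc k)) 0 @ s) 0 \<longleftrightarrow> True" if "0 \<notin> set q"
  unfolding first_two_adjacent_def using that
  by (intro iffI TrueI exI[of _ q] exI[of _ "replicate k 0 @ s"] conjI) auto

lemma mul_rep0: "mul_letters (replicate i 0) = (if i \<ge> 2 then {0} else {})"
  unfolding mul_letters_def by auto
lemma mul_rep1: "mul_letters (Suc 0 # replicate i 0) = (if i \<ge> 2 then {0} else {})"
  unfolding mul_letters_def by auto
lemma mul_rep01: "mul_letters (0 # Suc 0 # replicate i 0) = (if i \<ge> 1 then {0} else {})"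
  unfolding mul_letters_def by auto

lemma nat3_cases: "(n = 0 \<Longrightarrow> P) \<Longrightarrow> (n = 1 \<Longrightarrow> P) \<Longrightarrow> (\<And>k. n = Suc (Suc k) \<Longrightarrow> P) \<Longrightarrow> P"
  by (metis One_nat_def not0_implies_Suc)

lemma lam_rep0: "lam (replicate (Suc (Suc i)) 0) (replicate (Suc (Suc j)) 0)"
proof -
  have "tau1 ([] @ replicate (Suc (Suc i)) 0 @ []) ([] @ replicate (Suc (Suc j)) 0 @ [])"
    by (rule tau1_block)
  moreover have "first_two_adjacent ([] @ replicate (Suc (Suc k)) 0 @ []) 0" for k
    using adj_rep[of "[]" k "[]"] by simp
  ultimately show ?thesis unfolding lam_def by (auto simp: mul_letters_def)
qed

lemma lam_rep1: "lam (Suc 0 # replicate (Suc (Suc i)) 0) (Suc 0 # replicate (Suc (Suc j)) 0)"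
proof -
  have "tau1 ([Suc 0] @ replicate (Suc (Suc i)) 0 @ []) ([Suc 0] @ replicate (Suc (Suc j)) 0 @ [])"
    by (rule tau1_block)
  moreover have "first_two_adjacent ([Suc 0] @ replicate (Suc (Suc k)) 0 @ []) 0" for k
    using adj_rep[of "[Suc 0]" k "[]"] by simp
  ultimately show ?thesis unfolding lam_def by (auto simp: mul_letters_def)
qed

lemma lam_rep01: "lam (0 # Suc 0 # replicate (Suc i) 0) (0 # Suc 0 # replicate (Suc j) 0)"
proof -
  have "tau1 ([0, Suc 0] @ replicate (Suc i) 0 @ []) ([0, Suc 0] @ replicate (Suc j) 0 @ [])"
    by (rule tau1_block)
  thus ?thesis unfolding lam_def using not_adj01[of "Suc i"] not_adj01[of "Suc j"] by (auto simp: mul_letters_def)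
qed

lemma shp_cases[consumes 1, case_names R0 R1 R01]:
  assumes "shp w"
  obtains j where "w = replicate j 0" | j where "w = Suc 0 # replicate j 0"
  | j where "w = 0 # Suc 0 # replicate j 0"
  using assms unfolding shp_def by auto

lemma kap_lam: assumes "shp w" "shp z" "kap w = kap z" shows "lam w z"
  using assms(1)
proof (cases rule: shp_cases)
  case (R0 i)
  from assms(2) show ?thesis
  proof (cases rule: shp_cases)
    case (R0 j) with \<open>w = _\<close> assms(3) show ?thesis
      by (cases i rule: nat3_cases; cases j rule: nat3_cases) (auto simp: kap_rep0 lam_refl lam_rep0[simplified])
  qed (use assms(3) R0 in \<open>auto simp: kap_rep0 kap_rep1 kap_rep01 split: if_splits\<close>)
next
  case (R1 i)
  from assms(2) show ?thesis
  proof (cases rule: shp_cases)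
    case (R1 j) with \<open>w = _\<close> assms(3) show ?thesis
      by (cases i rule: nat3_cases; cases j rule: nat3_cases) (auto simp: kap_rep1 lam_refl lam_rep1[simplified])
  qed (use assms(3) R1 in \<open>auto simp: kap_rep0 kap_rep1 kap_rep01 split: if_splits\<close>)
next
  case (R01 i)
  from assms(2) show ?thesis
  proof (cases rule: shp_cases)
    case (R01 j) with \<open>w = _\<close> assms(3) show ?thesis
      by (cases i; cases j) (auto simp: kap_rep01 lam_refl lam_rep01[simplified])
  qed (use assms(3) R01 in \<open>auto simp: kap_rep0 kap_rep1 kap_rep01 split: if_splits\<close>)
qed

lemma lam_cap: assumes "lam r x" shows "min 2 (count_list x y) = min 2 (count_list r y)"
proof -
  have "set x = set r" using tau1_remdups assms unfolding lam_def by (metis remdups_adj_set)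
  moreover have "mul_letters x = mul_letters r" using assms unfolding lam_def by simp
  ultimately have a: "count_list x y = 0 \<longleftrightarrow> count_list r y = 0"
     and b: "count_list x y \<ge> 2 \<longleftrightarrow> count_list r y \<ge> 2"
    unfolding mul_letters_def by (auto simp: count_list_0_iff)
  show ?thesis
  proof (cases "count_list r y \<ge> 2")
    case True thus ?thesis using b by simp
  next
    case False thus ?thesis using a b by (cases "count_list r y"; cases "count_list x y") auto
  qed
qed

lemma lam_shp: assumes "shp r" "lam r x" shows "shp x \<and> kap x = kap r"
proof -
  have R: "remdups_adj r = remdups_adj x" using assms(2) tau1_remdups unfolding lam_def by blast
  have S: "set x = set r" by (metis R remdups_adj_set)
  have C: "min 2 (count_list x y) = min 2 (count_list r y)" for y using lam_cap[OF assms(2)] .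
  from assms(1) show ?thesis
  proof (cases rule: shp_cases)
    case (R0 i)
    show ?thesis
    proof (cases i)
      case 0
      hence "x = []" using R R0 by (metis remdups_adj_Nil_iff replicate_0)
      thus ?thesis using R0 0 unfolding shp_def by (metis replicate_0)
    next
      case (Suc i')
      have "remdups_adj r = [0]" using R0 Suc by (simp only: remdups_adj_replicate) simp
      hence "remdups_adj x = [0]" using R by simp
      then obtain n where x: "x = replicate n 0" by (metis remdups_adj_singleton)
      have "min 2 n = min 2 i" using C[of 0] R0 x by simp
      hence "kap x = kap r" using R0 x by (cases n rule: nat3_cases; cases i rule: nat3_cases) (auto simp: kap_rep0)
      thus ?thesis using x unfolding shp_def by blast
    qed
  next
    case (R1 i)
    have "x \<noteq> []" using R R1 by (metis list.distinct(1) remdups_adj_Nil_iff)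
    moreover have "hd x = Suc 0" using R R1 by (metis hd_remdups_adj list.sel(1))
    ultimately obtain x' where x: "x = Suc 0 # x'" by (cases x) auto
    have "count_list x (Suc 0) = 1" using C[of "Suc 0"] R1 by simp
    hence "Suc 0 \<notin> set x'" using x by (simp add: count_list_0_iff)
    moreover have "set x' \<subseteq> {0, Suc 0}" using S R1 x by auto
    ultimately have "\<forall>y\<in>set x'. y = 0" by auto
    then obtain m where x'': "x' = replicate m 0" by (metis all_eq_rep)
    have "min 2 m = min 2 i" using C[of 0] R1 x x'' by simp
    hence "kap x = kap r" using R1 x x'' by (cases m rule: nat3_cases; cases i rule: nat3_cases) (auto simp: kap_rep1)
    thus ?thesis using x x'' unfolding shp_def by (metis One_nat_def)
  next
    case (R01 i)
    have "x \<noteq> []" using R R01 by (metis list.distinct(1) remdups_adj_Nil_iff)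
    moreover have "hd x = 0" using R R01 by (metis hd_remdups_adj list.sel(1))
    ultimately obtain x' where x: "x = 0 # x'" by (cases x) auto
    have c1: "count_list x (Suc 0) = 1" using C[of "Suc 0"] R01 by simp
    have "Suc 0 \<in> set x'"
    proof (rule ccontr)
      assume "Suc 0 \<notin> set x'"
      hence "count_list x (Suc 0) = 0" using x by simp
      with c1 show False by simp
    qed
    then obtain p s where ps: "x' = p @ Suc 0 # s" by (meson split_list)
    have "count_list x (Suc 0) = count_list p (Suc 0) + 1 + count_list s (Suc 0)" using x ps by simp
    hence "count_list p (Suc 0) = 0" "count_list s (Suc 0) = 0" using c1 by simp_all
    hence n1: "Suc 0 \<notin> set p" "Suc 0 \<notin> set s" by (simp_all add: count_list_0_iff)
    have "set r \<subseteq> {0, Suc 0}" using R01 by auto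
    hence "set x \<subseteq> {0, Suc 0}" using S by simp
    hence "set p \<subseteq> {0, Suc 0}" "set s \<subseteq> {0, Suc 0}" using x ps by auto
    with n1 have z: "\<forall>y\<in>set p. y = 0" "\<forall>y\<in>set s. y = 0" by auto
    have "p = []"
    proof (rule ccontr)
      assume "p \<noteq> []"
      then obtain p' where "p = 0 # p'" using z by (cases p) auto
      hence xx: "x = [] @ [0, 0] @ (p' @ Suc 0 # s)" using x ps by simp
      hence "first_two_adjacent x 0" unfolding first_two_adjacent_def
        by (intro exI[of _ "[]"] exI[of _ "p' @ Suc 0 # s"]) simp
      moreover have "0 \<in> mul_letters x" using xx unfolding mul_letters_def by simp
      moreover have "mul_letters r = mul_letters x"
        "\<forall>y\<in>mul_letters r. first_two_adjacent r y \<longleftrightarrow> first_two_adjacent x y"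
        using assms(2) unfolding lam_def by auto
      ultimately have "first_two_adjacent r 0" by blast
      thus False using not_adj01[of i] R01 by simp
    qed
    obtain m where s': "s = replicate m 0" using z(2) by (metis all_eq_rep)
    have x2: "x = 0 # Suc 0 # replicate m 0" using x ps s' \<open>p = []\<close> by simp
    have "min 2 (Suc m) = min 2 (Suc i)" using C[of 0] R01 x2 by simp
    hence "kap x = kap r" using R01 x2 by (cases i; cases m) (auto simp: kap_rep01)
    thus ?thesis using x2 unfolding shp_def by (metis One_nat_def)
  qed
qed

lemma shp_drop: assumes "shp w" shows "shp (drop n w)"
  using assms
proof (cases rule: shp_cases)
  case (R0 j) thus ?thesis unfolding shp_def by (simp add: drop_replicate)
next
  case (R1 j) thus ?thesis unfolding shp_def by (cases n) (simp_all add: drop_replicate)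
next
  case (R01 j) thus ?thesis unfolding shp_def by (cases n rule: nat3_cases) (simp_all add: drop_replicate)
qed

lemma shp_take: assumes "shp w" shows "shp (take n w)"
  using assms
proof (cases rule: shp_cases)
  case (R0 j) thus ?thesis unfolding shp_def by (simp add: take_replicate)
next
  case (R1 j) thus ?thesis unfolding shp_def by (cases n) (simp_all add: take_replicate)
next
  case (R01 j) thus ?thesis unfolding shp_def
    by (cases n rule: nat3_cases) (simp_all add: take_replicate, metis replicate_0 replicate_Suc)
qed

lemma factor_sub: assumes "p @ w @ s = z" "shp z" shows "shp w"
proof -
  have "w = take (length w) (drop (length p) z)" using assms(1) by auto
  thus ?thesis using shp_take shp_drop assms(2) by metis
qed

lemma shp0: "shp (replicate j 0)" unfolding shp_def by blast
lemma shp1: "shp (Suc 0 # replicate j 0)" unfolding shp_def by (metis One_nat_def)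
lemma shp01: "shp (0 # Suc 0 # replicate j 0)" unfolding shp_def by (metis One_nat_def)

lemma lam_ata: "lam [0, 1, 0] (0 # Suc 0 # replicate (Suc j) 0)"
proof -
  have "[0, 1, 0] = 0 # Suc 0 # replicate 1 (0::nat)" by simp
  moreover have "lam (0 # Suc 0 # replicate 1 0) (0 # Suc 0 # replicate (Suc j) 0)"
    by (rule kap_lam) (simp_all only: shp01 kap_rep01, simp)
  ultimately show ?thesis by simp
qed

lemma lfactor_shp: "lfactor w ata_word \<longleftrightarrow> shp w"
proof
  assume "lfactor w ata_word"
  then obtain p s where l: "lam [0, 1, 0] (p @ w @ s)" unfolding lfactor_def ata_word_def by blast
  have "shp [0, 1, 0]" unfolding shp_def by (intro disjI2 exI[of _ 1]) simp
  from lam_shp[OF this l] have sh: "shp (p @ w @ s)" and k: "kap (p @ w @ s) = NATA"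
    by (simp_all add: kap_rep01)
  from factor_sub[OF HOL.refl sh] show "shp w" .
next
  assume "shp w"
  thus "lfactor w ata_word" unfolding lfactor_def ata_word_def
  proof (cases rule: shp_cases)
    case (R0 j)
    have "[0, Suc 0] @ w @ [0] = 0 # Suc 0 # replicate (Suc j) 0" using R0 by (simp add: replicate_append_same)
    thus "\<exists>p s. lam [0, 1, 0] (p @ w @ s)" using lam_ata by metis
  next
    case (R1 j)
    have "[0] @ w @ [0] = 0 # Suc 0 # replicate (Suc j) 0" using R1 by (simp add: replicate_append_same)
    thus "\<exists>p s. lam [0, 1, 0] (p @ w @ s)" using lam_ata by metis
  next
    case (R01 j)
    have "[] @ w @ [0] = 0 # Suc 0 # replicate (Suc j) 0" using R01 by (simp add: replicate_append_same)
    thus "\<exists>p s. lam [0, 1, 0] (p @ w @ s)" using lam_ata by metis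
  qed
qed


lemma kapNZ1: "Suc 0 \<in> set r \<Longrightarrow> kap (Suc 0 # r) = NZ" by auto
lemma kapNZ01: "Suc 0 \<in> set r \<Longrightarrow> kap (0 # Suc 0 # r) = NZ" by auto
lemma kapNZ00: "Suc 0 \<in> set r \<Longrightarrow> kap (0 # 0 # r) = NZ" by auto

lemma kap_hom: assumes "shp x" "shp y" shows "kap (x @ y) = nmult (kap x) (kap y)"
  using assms(1)
proof (cases rule: shp_cases)
  case (R0 i)
  from assms(2) show ?thesis
  proof (cases rule: shp_cases)
    case (R0 j)
    have "x @ y = replicate (i + j) 0" using R0 \<open>x = _\<close> by (simp add: replicate_add)
    thus ?thesis using R0 \<open>x = _\<close>
      by (simp only: kap_rep0) (cases i rule: nat3_cases; cases j rule: nat3_cases; simp)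
  next
    case (R1 j)
    show ?thesis using R1 \<open>x = _\<close>
      by (cases i rule: nat3_cases; cases j rule: nat3_cases; simp add: kapNZ00)
  next
    case (R01 j)
    show ?thesis using R01 \<open>x = _\<close>
      by (cases i rule: nat3_cases; cases j rule: nat3_cases; simp add: kapNZ00)
  qed
next
  case (R1 i)
  from assms(2) show ?thesis
  proof (cases rule: shp_cases)
    case (R0 j)
    have "x @ y = Suc 0 # replicate (i + j) 0" using R0 \<open>x = _\<close> by (simp add: replicate_add)
    thus ?thesis using R0 \<open>x = _\<close>
      by (simp only: kap_rep0 kap_rep1) (cases i rule: nat3_cases; cases j rule: nat3_cases; simp)
  next
    case (R1 j)
    show ?thesis using R1 \<open>x = _\<close>
      by (cases i rule: nat3_cases; cases j rule: nat3_cases; simp add: kapNZ1)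
  next
    case (R01 j)
    show ?thesis using R01 \<open>x = _\<close>
      by (cases i rule: nat3_cases; cases j rule: nat3_cases; simp add: kapNZ1)
  qed
next
  case (R01 i)
  from assms(2) show ?thesis
  proof (cases rule: shp_cases)
    case (R0 j)
    have "x @ y = 0 # Suc 0 # replicate (i + j) 0" using R0 \<open>x = _\<close> by (simp add: replicate_add)
    thus ?thesis using R0 \<open>x = _\<close>
      by (simp only: kap_rep0 kap_rep01) (cases i rule: nat3_cases; cases j rule: nat3_cases; simp)
  next
    case (R1 j)
    show ?thesis using R1 \<open>x = _\<close>
      by (cases i rule: nat3_cases; cases j rule: nat3_cases; simp add: kapNZ01)
  next
    case (R01 j)
    show ?thesis using R01 \<open>x = _\<close>
      by (cases i rule: nat3_cases; cases j rule: nat3_cases; simp add: kapNZ01)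
  qed
qed

definition dec :: "word set option \<Rightarrow> N" where
  "dec X = (case X of None \<Rightarrow> NZ | Some S \<Rightarrow> kap (SOME x. x \<in> S))"

definition enc :: "N \<Rightarrow> word set option" where
  "enc n = (if n = NZ then None else Some (lclass (rep n)))"

abbreviation "Car \<equiv> Mlam_carrier {ata_word}"
abbreviation "Mm \<equiv> Mlam_mult {ata_word}"

lemma car_iff: "X \<in> Car \<longleftrightarrow> X = None \<or> (\<exists>r. shp r \<and> X = Some (lclass r))"
  unfolding Mlam_carrier_def using lfactor_shp by auto

lemma some_lclass: assumes "shp r" shows "lam r (SOME x. x \<in> lclass r)"
proof -
  have "r \<in> lclass r" unfolding lclass_def using lam_refl by simp
  hence "(SOME x. x \<in> lclass r) \<in> lclass r" by (rule someI)
  thus ?thesis unfolding lclass_def by simp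
qed

lemma some_lclass2: assumes "shp r" shows "shp (SOME x. x \<in> lclass r) \<and> kap (SOME x. x \<in> lclass r) = kap r"
  using lam_shp[OF assms some_lclass[OF assms]] .

lemma dec_Some: "shp r \<Longrightarrow> dec (Some (lclass r)) = kap r"
  unfolding dec_def using some_lclass2 by simp

lemma mult_closed: assumes "X \<in> Car" "Y \<in> Car" shows "Mm X Y \<in> Car"
proof (cases X)
  case None thus ?thesis by (simp add: Mlam_carrier_def)
next
  case (Some S)
  show ?thesis
  proof (cases Y)
    case None thus ?thesis using Some by (simp add: Mlam_carrier_def)
  next
    case (Some T)
    thus ?thesis using \<open>X = Some S\<close> unfolding Mlam_carrier_def by (auto simp: Let_def)
  qed
qed

lemma nmult_NZ[simp]: "nmult x NZ = NZ" by (cases x) auto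

lemma dec_mult: assumes "X \<in> Car" "Y \<in> Car" shows "dec (Mm X Y) = nmult (dec X) (dec Y)"
proof (cases "X = None \<or> Y = None")
  case True thus ?thesis
  proof
    assume "X = None" thus ?thesis by (simp add: dec_def)
  next
    assume "Y = None" thus ?thesis by (cases X) (simp_all add: dec_def)
  qed
next
  case False
  then obtain r r' where r: "shp r" "X = Some (lclass r)" and r': "shp r'" "Y = Some (lclass r')"
    using assms car_iff by metis
  define x where "x = (SOME x. x \<in> lclass r)"
  define y where "y = (SOME x. x \<in> lclass r')"
  have x: "shp x" "kap x = kap r" using some_lclass2[OF r(1)] x_def by auto
  have y: "shp y" "kap y = kap r'" using some_lclass2[OF r'(1)] y_def by auto
  have h: "kap (x @ y) = nmult (kap r) (kap r')" using kap_hom[OF x(1) y(1)] x y by simp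
  have "Mm X Y = (if lfactor (x @ y) ata_word then Some (lclass (x @ y)) else None)"
    using r r' x_def y_def by (simp add: Let_def)
  moreover have "dec X = kap r" "dec Y = kap r'" using r r' dec_Some by auto
  moreover have "\<not> shp (x @ y) \<Longrightarrow> kap (x @ y) = NZ" using kap_shp by blast
  moreover have "shp (x @ y) \<Longrightarrow> dec (Some (lclass (x @ y))) = kap (x @ y)" using dec_Some by blast
  ultimately show ?thesis using h lfactor_shp by (auto simp: dec_def)
qed

lemma one_car: "Mlam_one \<in> Car" "dec Mlam_one = N1"
proof -
  have s: "shp []" unfolding shp_def by (metis replicate_0)
  thus "Mlam_one \<in> Car" unfolding Mlam_one_def using car_iff by blast
  show "dec Mlam_one = N1" unfolding Mlam_one_def using dec_Some[OF s] by simp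
qed

lemma eval_cons: "eval_word m o1 \<phi> (a # w) = m (\<phi> a) (eval_word m o1 \<phi> w)"
  "eval_word m o1 \<phi> [] = o1"
  unfolding eval_word_def by simp_all

lemma dec_eval: assumes "range \<phi> \<subseteq> Car"
  shows "eval_word Mm Mlam_one \<phi> w \<in> Car \<and> dec (eval_word Mm Mlam_one \<phi> w) = eval_word nmult N1 (dec \<circ> \<phi>) w"
proof (induction w)
  case Nil thus ?case using one_car by (simp add: eval_cons)
next
  case (Cons a w)
  have "\<phi> a \<in> Car" using assms by auto
  thus ?case using Cons mult_closed dec_mult by (simp add: eval_cons)
qed

lemma dec_inj: assumes "X \<in> Car" "Y \<in> Car" "dec X = dec Y" shows "X = Y"
proof -
  have nz: "shp r \<Longrightarrow> kap r \<noteq> NZ" for r using kap_shp by blast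
  show ?thesis
  proof (cases "X = None")
    case True thus ?thesis using assms car_iff dec_Some nz by (metis dec_def option.case(1))
  next
    case False
    then obtain r where r: "shp r" "X = Some (lclass r)" using assms car_iff by metis
    show ?thesis
    proof (cases "Y = None")
      case True thus ?thesis using assms r dec_Some nz by (metis dec_def option.case(1))
    next
      case False
      then obtain r' where r': "shp r'" "Y = Some (lclass r')" using assms car_iff by metis
      have "kap r = kap r'" using assms(3) r r' dec_Some by simp
      hence "lam r r'" using kap_lam r r' by blast
      thus ?thesis using r r' lclass_eq by simp
    qed
  qed
qed

lemma enc_car: "enc n \<in> Car \<and> dec (enc n) = n"
proof (cases "n = NZ")
  case True thus ?thesis by (simp add: enc_def dec_def Mlam_carrier_def)
next
  case False
  have k: "kap (rep n) = n" using False by (cases n) simp_all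
  hence s: "shp (rep n)" using kap_shp False by metis
  thus ?thesis using False k dec_Some car_iff unfolding enc_def by auto
qed

lemma Mlam_iff: "monoid_satisfies Car Mm Mlam_one u v \<longleftrightarrow>
   (\<forall>\<psi>. eval_word nmult N1 \<psi> u = eval_word nmult N1 \<psi> v)"
proof
  assume H: "monoid_satisfies Car Mm Mlam_one u v"
  show "\<forall>\<psi>. eval_word nmult N1 \<psi> u = eval_word nmult N1 \<psi> v"
  proof
    fix \<psi> :: "nat \<Rightarrow> N"
    have r: "range (enc \<circ> \<psi>) \<subseteq> Car" using enc_car by auto
    have d: "dec \<circ> (enc \<circ> \<psi>) = \<psi>" using enc_car by auto
    have "eval_word Mm Mlam_one (enc \<circ> \<psi>) u = eval_word Mm Mlam_one (enc \<circ> \<psi>) v"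
      using H r unfolding monoid_satisfies_def by blast
    thus "eval_word nmult N1 \<psi> u = eval_word nmult N1 \<psi> v" using dec_eval[OF r] d by metis
  qed
next
  assume H: "\<forall>\<psi>. eval_word nmult N1 \<psi> u = eval_word nmult N1 \<psi> v"
  show "monoid_satisfies Car Mm Mlam_one u v" unfolding monoid_satisfies_def
  proof (intro allI impI)
    fix \<phi> :: "nat \<Rightarrow> word set option" assume r: "range \<phi> \<subseteq> Car"
    show "eval_word Mm Mlam_one \<phi> u = eval_word Mm Mlam_one \<phi> v"
      using dec_eval[OF r, of u] dec_eval[OF r, of v] H dec_inj by metis
  qed
qed

definition pairR :: "(nat \<Rightarrow> bool) \<Rightarrow> (nat \<Rightarrow> bool) \<Rightarrow> word \<Rightarrow> bool" where
  "pairR P Q w \<longleftrightarrow> (\<exists>i j. i < j \<and> j < length w \<and> P (w ! i) \<and> Q (w ! j))"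

lemma pairR_Nil[simp]: "\<not> pairR P Q []" unfolding pairR_def by simp

lemma pairR_Cons: "pairR P Q (a # w) \<longleftrightarrow> (P a \<and> (\<exists>x\<in>set w. Q x)) \<or> pairR P Q w"
proof
  assume "pairR P Q (a # w)"
  then obtain i j where ij: "i < j" "j < length (a # w)" "P ((a # w) ! i)" "Q ((a # w) ! j)"
    unfolding pairR_def by blast
  then obtain j' where j: "j = Suc j'" by (cases j) auto
  show "(P a \<and> (\<exists>x\<in>set w. Q x)) \<or> pairR P Q w"
  proof (cases i)
    case 0
    thus ?thesis using ij j by (auto intro: nth_mem)
  next
    case (Suc i')
    hence "pairR P Q w" unfolding pairR_def using ij j by (intro exI[of _ i'] exI[of _ j']) auto
    thus ?thesis by simp
  qed
next
  assume "(P a \<and> (\<exists>x\<in>set w. Q x)) \<or> pairR P Q w"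
  thus "pairR P Q (a # w)"
  proof
    assume "P a \<and> (\<exists>x\<in>set w. Q x)"
    then obtain j where "j < length w" "Q (w ! j)" "P a" by (metis in_set_conv_nth)
    thus ?thesis unfolding pairR_def by (intro exI[of _ 0] exI[of _ "Suc j"]) auto
  next
    assume "pairR P Q w"
    then obtain i j where "i < j" "j < length w" "P (w ! i)" "Q (w ! j)" unfolding pairR_def by blast
    thus ?thesis unfolding pairR_def by (intro exI[of _ "Suc i"] exI[of _ "Suc j"]) auto
  qed
qed

lemma count2_pairR: "count_list w x \<ge> 2 \<longleftrightarrow> pairR (\<lambda>y. y = x) (\<lambda>y. y = x) w"
proof (induction w)
  case Nil thus ?case by simp
next
  case (Cons a w)
  have "count_list w x \<ge> 1 \<longleftrightarrow> x \<in> set w" by (metis count_list_0_iff less_one not_le)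
  thus ?case using Cons by (auto simp: pairR_Cons)
qed

lemma fo1: "x \<in> set w \<Longrightarrow> first_occ w x < length w \<and> w ! first_occ w x = x"
  unfolding first_occ_def by (rule LeastI_ex) (metis in_set_conv_nth)

lemma fo2: "i < length w \<Longrightarrow> w ! i = x \<Longrightarrow> first_occ w x \<le> i"
  unfolding first_occ_def by (rule Least_le) simp

lemma lo1: "x \<in> set w \<Longrightarrow> last_occ w x < length w \<and> w ! last_occ w x = x"
  unfolding last_occ_def
  by (rule GreatestI_ex_nat[where b = "length w"]) (auto simp: in_set_conv_nth)

lemma lo2: "i < length w \<Longrightarrow> w ! i = x \<Longrightarrow> i \<le> last_occ w x"
  unfolding last_occ_def by (rule Greatest_le_nat[where b = "length w"]) auto

lemma so1: assumes "count_list w x \<ge> 2"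
  shows "first_occ w x < second_occ w x \<and> second_occ w x < length w \<and> w ! second_occ w x = x"
proof -
  obtain i j where ij: "i < j" "j < length w" "w ! i = x" "w ! j = x"
    using assms count2_pairR unfolding pairR_def by blast
  have "first_occ w x \<le> i" using fo2 ij by simp
  hence "first_occ w x < j \<and> j < length w \<and> w ! j = x" using ij by simp
  thus ?thesis unfolding second_occ_def by (rule LeastI)
qed

lemma so2: "first_occ w x < i \<Longrightarrow> i < length w \<Longrightarrow> w ! i = x \<Longrightarrow> second_occ w x \<le> i"
  unfolding second_occ_def by (rule Least_le) simp

lemma first_last_pair: assumes "x \<in> set w" "y \<in> set w"
  shows "first_occ w y < last_occ w x \<longleftrightarrow> (\<exists>i j. i < j \<and> j < length w \<and> w ! i = y \<and> w ! j = x)"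
proof
  assume "first_occ w y < last_occ w x"
  thus "\<exists>i j. i < j \<and> j < length w \<and> w ! i = y \<and> w ! j = x" using fo1[OF assms(2)] lo1[OF assms(1)] by blast
next
  assume "\<exists>i j. i < j \<and> j < length w \<and> w ! i = y \<and> w ! j = x"
  then obtain i j where "i < j" "j < length w" "w ! i = y" "w ! j = x" by blast
  thus "first_occ w y < last_occ w x" using fo2[of i w y] lo2[of j w x] by simp
qed

lemma pairR_occ: "pairR P Q w \<longleftrightarrow> (\<exists>y\<in>set w. \<exists>x\<in>set w. P y \<and> Q x \<and> first_occ w y < last_occ w x)"
proof
  assume "pairR P Q w"
  then obtain i j where ij: "i < j" "j < length w" "P (w ! i)" "Q (w ! j)" unfolding pairR_def by blast
  have "w ! i \<in> set w" "w ! j \<in> set w" using ij by auto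
  moreover have "first_occ w (w ! i) < last_occ w (w ! j)"
    using first_last_pair[of "w ! j" w "w ! i"] ij \<open>w ! i \<in> set w\<close> \<open>w ! j \<in> set w\<close> by blast
  ultimately show "\<exists>y\<in>set w. \<exists>x\<in>set w. P y \<and> Q x \<and> first_occ w y < last_occ w x" using ij by blast
next
  assume "\<exists>y\<in>set w. \<exists>x\<in>set w. P y \<and> Q x \<and> first_occ w y < last_occ w x"
  then obtain x y where "y \<in> set w" "x \<in> set w" "P y" "Q x" "first_occ w y < last_occ w x" by blast
  thus "pairR P Q w" unfolding pairR_def using first_last_pair by metis
qed

lemma take_mem: assumes "x \<in> set w" shows "x \<in> set (take n w) \<longleftrightarrow> first_occ w x < n"
proof
  assume "x \<in> set (take n w)"
  then obtain i where "i < length (take n w)" "take n w ! i = x" by (metis in_set_conv_nth)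
  thus "first_occ w x < n" using fo2[of i w x] by auto
next
  assume "first_occ w x < n"
  thus "x \<in> set (take n w)" using fo1[OF assms] by (metis in_set_conv_nth length_take min_less_iff_conj nth_take)
qed

lemma take_count2: assumes "count_list w x \<ge> 2" shows "count_list (take n w) x \<ge> 2 \<longleftrightarrow> second_occ w x < n"
proof
  assume "count_list (take n w) x \<ge> 2"
  then obtain i j where ij: "i < j" "j < length (take n w)" "take n w ! i = x" "take n w ! j = x"
    using count2_pairR unfolding pairR_def by blast
  hence "w ! i = x" "w ! j = x" "j < n" "j < length w" by auto
  hence "first_occ w x \<le> i" using fo2[of i w x] ij by simp
  hence "second_occ w x \<le> j" using so2[of w x j] ij \<open>w ! j = x\<close> \<open>j < length w\<close> by simp
  thus "second_occ w x < n" using \<open>j < n\<close> by simp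
next
  assume a: "second_occ w x < n"
  have xin: "x \<in> set w" using assms by (metis count_notin not_numeral_le_zero)
  have "pairR (\<lambda>y. y = x) (\<lambda>y. y = x) (take n w)" unfolding pairR_def using so1[OF assms] a fo1[OF xin]
    by (intro exI[of _ "first_occ w x"] exI[of _ "second_occ w x"]) auto
  thus "count_list (take n w) x \<ge> 2" using count2_pairR by blast
qed

lemma drop_mem: assumes "x \<in> set w" shows "x \<in> set (drop n w) \<longleftrightarrow> n \<le> last_occ w x"
proof
  assume "x \<in> set (drop n w)"
  then obtain i where "i < length (drop n w)" "drop n w ! i = x" by (metis in_set_conv_nth)
  hence "n + i < length w" "w ! (n + i) = x" by auto
  hence "n + i \<le> last_occ w x" by (rule lo2)
  thus "n \<le> last_occ w x" by simp
next
  assume "n \<le> last_occ w x"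
  hence "drop n w ! (last_occ w x - n) = x" "last_occ w x - n < length (drop n w)" using lo1[OF assms] by auto
  thus "x \<in> set (drop n w)" by (metis nth_mem)
qed

lemma fo_split: assumes "w = w1 @ t # w2" "t \<notin> set w1" shows "first_occ w t = length w1"
proof -
  have "first_occ w t \<le> length w1" using fo2[of "length w1" w t] assms by simp
  moreover have "t \<in> set w" using assms by simp
  note f = fo1[OF this]
  { assume "first_occ w t < length w1"
    hence "w1 ! first_occ w t = t" using f assms by (simp add: nth_append)
    hence False using assms \<open>first_occ w t < length w1\<close> by (metis nth_mem) }
  ultimately show ?thesis by fastforce
qed

lemma simp_last: assumes "count_list w x = 1" shows "last_occ w x = first_occ w x"
proof (rule ccontr)
  assume ne: "last_occ w x \<noteq> first_occ w x"
  have xin: "x \<in> set w" using assms by (metis count_notin zero_neq_one)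
  have "first_occ w x \<le> last_occ w x" using fo1[OF xin] lo2 by blast
  hence "first_occ w x < last_occ w x" using ne by simp
  hence "pairR (\<lambda>y. y = x) (\<lambda>y. y = x) w" unfolding pairR_def using fo1[OF xin] lo1[OF xin] by blast
  hence "count_list w x \<ge> 2" using count2_pairR by blast
  thus False using assms by simp
qed

abbreviation evN :: "(nat \<Rightarrow> N) \<Rightarrow> word \<Rightarrow> N" where "evN \<psi> w \<equiv> eval_word nmult N1 \<psi> w"

lemma evN_app: "evN \<psi> (x @ y) = nmult (evN \<psi> x) (evN \<psi> y)"
  by (induction x) (simp_all add: eval_cons nmult_assoc)

definition isT :: "N \<Rightarrow> bool" where "isT n \<longleftrightarrow> n \<in> {NT, NAT, NTA, NTA2, NATA}"

fun alen :: "N \<Rightarrow> nat" where "alen NA = 1" | "alen NA2 = 2" | "alen _ = 0"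

definition apow :: "nat \<Rightarrow> N" where "apow k = (if k = 0 then N1 else if k = 1 then NA else NA2)"

lemma nmult_apow: "\<not> isT a \<Longrightarrow> a \<noteq> NZ \<Longrightarrow> nmult a (apow s) = apow (alen a + s)"
  by (cases a; cases s rule: nat3_cases) (simp_all add: isT_def apow_def)

lemma evN_noT: "\<forall>x\<in>set w. \<not> isT (\<psi> x) \<Longrightarrow>
   evN \<psi> w = (if \<exists>x\<in>set w. \<psi> x = NZ then NZ else apow (sum_list (map (alen \<circ> \<psi>) w)))"
proof (induction w)
  case Nil thus ?case by (simp add: eval_cons apow_def)
next
  case (Cons a w)
  thus ?case by (cases "\<psi> a = NZ") (auto simp: eval_cons nmult_apow comp_def)
qed

lemma min2_add: "min 2 (a + b) = min 2 (min 2 a + min (2::nat) b)" by simp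

lemma min2_sum: "finite S \<Longrightarrow> (\<forall>x\<in>S. min 2 (f x) = min 2 (g x)) \<Longrightarrow> min 2 (sum f S) = min (2::nat) (sum g S)"
proof (induction S rule: finite_induct)
  case empty thus ?case by simp
next
  case (insert a S)
  hence "min 2 (sum f S) = min 2 (sum g S)" "min 2 (f a) = min 2 (g a)" by auto
  thus ?case using insert min2_add by (metis sum.insert)
qed

lemma min2_mult: "min 2 c = min 2 d \<Longrightarrow> min 2 (c * g) = min (2::nat) (d * g)"
proof (cases "c \<ge> 2")
  case True
  assume h: "min 2 c = min 2 d"
  hence "d \<ge> 2" using True by simp
  show ?thesis
  proof (cases g)
    case 0 thus ?thesis by simp
  next
    case (Suc g')
    hence "c \<le> c * g" "d \<le> d * g" by simp_all
    hence "2 \<le> c * g" "2 \<le> d * g" using True \<open>d \<ge> 2\<close> by linarith+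
    thus ?thesis by (simp add: min_def)
  qed
next
  case False
  assume "min 2 c = min 2 d"
  thus ?thesis using False by (simp add: min_def split: if_splits)
qed

lemma capped_sum: assumes "\<forall>x. min 2 (count_list w1 x) = min 2 (count_list w2 x)"
  shows "min 2 (sum_list (map g w1)) = min (2::nat) (sum_list (map g w2))"
proof -
  have "x \<in> set w1 \<longleftrightarrow> x \<in> set w2" for x using assms[rule_format, of x]
    by (metis count_list_0_iff min_0R min_def zero_neq_numeral)
  hence s: "set w1 = set w2" by blast
  show ?thesis unfolding sum_list_map_eq_sum_count s
    by (rule min2_sum) (auto intro: min2_mult assms[rule_format])
qed

lemma apow_min: "apow (min 2 s) = apow s" by (simp add: apow_def min_def)

lemma noT_eq: assumes "\<forall>x\<in>set w1. \<not> isT (\<psi> x)" "\<forall>x. min 2 (count_list w1 x) = min 2 (count_list w2 x)"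
  shows "evN \<psi> w1 = evN \<psi> w2"
proof -
  have "x \<in> set w1 \<longleftrightarrow> x \<in> set w2" for x using assms(2)[rule_format, of x]
    by (metis count_list_0_iff min_0R min_def zero_neq_numeral)
  hence s: "set w1 = set w2" by blast
  have "apow (sum_list (map (alen \<circ> \<psi>) w1)) = apow (sum_list (map (alen \<circ> \<psi>) w2))"
    using capped_sum[OF assms(2)] apow_min by metis
  thus ?thesis using evN_noT assms(1) s by simp
qed

lemma twoT: "isT a \<Longrightarrow> isT c \<Longrightarrow> nmult a (nmult b c) = NZ"
  by (cases a; cases b; cases c; simp add: isT_def)

lemma evN_twoT: assumes "isT (\<psi> a)" "isT (\<psi> b)" shows "evN \<psi> (p @ a # m @ b # s) = NZ"
proof -
  have "evN \<psi> (p @ a # m @ b # s) = nmult (evN \<psi> p) (nmult (nmult (\<psi> a) (nmult (evN \<psi> m) (\<psi> b))) (evN \<psi> s))"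
    by (simp add: evN_app eval_cons nmult_assoc)
  thus ?thesis using twoT[OF assms] by simp
qed

lemma evN_Z: assumes "x \<in> set w" "\<psi> x = NZ" shows "evN \<psi> w = NZ"
proof -
  obtain p s where "w = p @ x # s" using assms(1) by (meson split_list)
  thus ?thesis using assms(2) by (simp add: evN_app eval_cons)
qed

lemma evN_TT: assumes "x \<in> set w" "y \<in> set w" "isT (\<psi> x)" "isT (\<psi> y)" "x \<noteq> y \<or> count_list w x \<ge> 2"
  shows "evN \<psi> w = NZ"
proof -
  obtain p s where w: "w = p @ x # s" "x \<notin> set p" using assms(1) by (meson split_list_first)
  show ?thesis
  proof (cases "y \<in> set s")
    case True
    then obtain m s' where "s = m @ y # s'" by (meson split_list)
    thus ?thesis using w evN_twoT assms by simp
  next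
    case False
    have "y \<in> set p"
    proof (cases "x = y")
      case True
      hence "count_list w x \<ge> 2" using assms(5) by simp
      moreover have "count_list w x = 1 + count_list s x" using w by simp
      ultimately have "x \<in> set s" by (metis count_notin add_0_right one_less_numeral_iff not_le semiring_norm(76))
      thus ?thesis using False True by simp
    next
      case False
      thus ?thesis using assms(2) w \<open>y \<notin> set s\<close> by auto
    qed
    then obtain p1 m where "p = p1 @ y # m" by (meson split_list)
    thus ?thesis using w evN_twoT[of \<psi> y x p1 m s] assms by simp
  qed
qed

abbreviation evA :: "(nat \<Rightarrow> A01) \<Rightarrow> word \<Rightarrow> A01" where "evA \<phi> w \<equiv> eval_word a01_mult One \<phi> w"

definition isE :: "A01 \<Rightarrow> bool" where "isE a \<longleftrightarrow> a = E \<or> a = EF"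
definition isF :: "A01 \<Rightarrow> bool" where "isF a \<longleftrightarrow> a = F \<or> a = EF"

lemma evA_closed: "evA \<phi> w = (if (\<exists>x\<in>set w. \<phi> x = Z) \<or> pairR (\<lambda>x. isF (\<phi> x)) (\<lambda>x. isE (\<phi> x)) w then Z
   else if \<exists>x\<in>set w. isE (\<phi> x) then (if \<exists>x\<in>set w. isF (\<phi> x) then EF else E)
   else if \<exists>x\<in>set w. isF (\<phi> x) then F else One)"
proof (induction w)
  case Nil thus ?case by (simp add: eval_cons)
next
  case (Cons a w)
  show ?case unfolding eval_cons Cons pairR_Cons
    by (cases "\<phi> a") (auto simp: isE_def isF_def)
qed

lemma min2_iff: "min 2 a = min 2 (b::nat) \<longleftrightarrow> ((a = 1 \<longleftrightarrow> b = 1) \<and> (2 \<le> a \<longleftrightarrow> 2 \<le> b))"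
  by (auto simp: min_def)

lemma capA: "(simp_letters u = simp_letters v \<and> mul_letters u = mul_letters v) \<longleftrightarrow>
   (\<forall>x. min 2 (count_list u x) = min 2 (count_list v x))"
  unfolding min2_iff simp_letters_def mul_letters_def by auto

lemma cap_set: "\<forall>x. min 2 (count_list u x) = min 2 (count_list v x) \<Longrightarrow> set u = set v"
  by (metis count_list_0_iff min_0R min_def zero_neq_numeral subsetI subset_antisym)

lemma sum_single: "sum_list (map (alen \<circ> (\<lambda>y. if y = x then NA else N1)) w) = count_list w x"
  by (induction w) auto

lemma evN_single: "evN (\<lambda>y. if y = x then NA else N1) w = apow (count_list w x)"
  using evN_noT[of w "\<lambda>y. if y = x then NA else N1"] sum_single[of x w] by (auto simp: isT_def)

lemma apow_inj: "apow a = apow b \<Longrightarrow> min 2 a = min 2 b"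
  by (cases a rule: nat3_cases; cases b rule: nat3_cases) (auto simp: apow_def)

lemma split_simple: assumes "count_list w t = 1" shows "\<exists>w1 w2. w = w1 @ t # w2 \<and> t \<notin> set w1 \<and> t \<notin> set w2"
proof -
  have "t \<in> set w" using assms by (metis count_notin zero_neq_one)
  then obtain w1 w2 where w: "w = w1 @ t # w2" "t \<notin> set w1" by (meson split_list_first)
  hence "count_list w2 t = 0" using assms by simp
  thus ?thesis using w by (metis count_list_0_iff)
qed

lemma pos_base: assumes "w = w1 @ t # w2" "t \<notin> set w1"
  shows "first_occ w t = length w1" "take (length w1) w = w1" "drop (Suc (length w1)) w = w2"
        "w ! length w1 = t"
  using fo_split[OF assms] assms by auto

lemma pos_count0: assumes "w = w1 @ t # w2" "t \<notin> set w1" "y \<in> set w" "y \<noteq> t"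
  shows "count_list w1 y = 0 \<longleftrightarrow> first_occ w t < first_occ w y"
proof -
  note b = pos_base[OF assms(1,2)]
  have "first_occ w y \<noteq> length w1" using fo1[OF assms(3)] b(4) assms(4) by metis
  moreover have "count_list w1 y = 0 \<longleftrightarrow> \<not> first_occ w y < length w1"
    using take_mem[OF assms(3), of "length w1"] b(2) count_list_0_iff by metis
  ultimately show ?thesis using b(1) by auto
qed

lemma pos_count2: assumes "w = w1 @ t # w2" "t \<notin> set w1" "count_list w y \<ge> 2" "y \<noteq> t"
  shows "count_list w1 y \<ge> 2 \<longleftrightarrow> \<not> first_occ w t < second_occ w y"
proof -
  note b = pos_base[OF assms(1,2)]
  have "second_occ w y \<noteq> length w1" using so1[OF assms(3)] b(4) assms(4) by metis
  moreover have "count_list w1 y \<ge> 2 \<longleftrightarrow> second_occ w y < length w1"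
    using take_count2[OF assms(3), of "length w1"] b(2) by metis
  ultimately show ?thesis using b(1) by auto
qed

lemma pos_u2: assumes "w = w1 @ t # w2" "t \<notin> set w1" "y \<in> set w"
  shows "y \<in> set w2 \<longleftrightarrow> first_occ w t < last_occ w y"
  using drop_mem[OF assms(3), of "Suc (length w1)"] pos_base[OF assms(1,2)] by auto

lemma tableV: "nmult (apow a) (nmult NT (apow b)) \<in> {NT, NTA, NTA2} \<longleftrightarrow> a = 0"
  "nmult (apow a) (nmult NT (apow b)) = NZ \<longleftrightarrow> a \<ge> 2"
  by (cases a rule: nat3_cases; cases b rule: nat3_cases; simp add: apow_def)+

lemma tableA2: "isT a \<Longrightarrow> nmult NA2 (nmult a b) = NZ"
  by (cases a; cases b; simp add: isT_def)

lemma tableA: "isT a \<Longrightarrow> nmult NA (nmult a NA) = nmult NA (nmult a NA2)"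
  by (cases a; simp add: isT_def)

lemma evN_cong: "\<forall>z\<in>set w. \<psi> z = \<psi>' z \<Longrightarrow> evN \<psi> w = evN \<psi>' w"
  by (induction w) (simp_all add: eval_cons)

lemma noTZ_val: assumes "\<forall>y\<in>set w. \<not> isT (\<psi> y) \<and> \<psi> y \<noteq> NZ"
  shows "evN \<psi> w \<in> {N1, NA, NA2}" "evN \<psi> w = N1 \<longleftrightarrow> (\<forall>y\<in>set w. \<psi> y = N1)"
proof -
  have e: "evN \<psi> w = apow (sum_list (map (alen \<circ> \<psi>) w))" using evN_noT[of w \<psi>] assms by auto
  thus "evN \<psi> w \<in> {N1, NA, NA2}" by (simp add: apow_def)
  have a: "alen (\<psi> y) = 0 \<longleftrightarrow> \<psi> y = N1" if "y \<in> set w" for y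
    using assms that by (cases "\<psi> y") (auto simp: isT_def)
  have "apow s = N1 \<longleftrightarrow> s = 0" for s by (simp add: apow_def)
  hence "evN \<psi> w = N1 \<longleftrightarrow> (\<forall>y\<in>set w. alen (\<psi> y) = 0)" using e by (simp add: sum_list_eq_0_iff)
  thus "evN \<psi> w = N1 \<longleftrightarrow> (\<forall>y\<in>set w. \<psi> y = N1)" using a by auto
qed

lemma join_iff: "join_A01_Mata_satisfies u v \<longleftrightarrow> (\<forall>\<phi>. evA \<phi> u = evA \<phi> v) \<and> (\<forall>\<psi>. evN \<psi> u = evN \<psi> v)"
  unfolding join_A01_Mata_satisfies_def Mlam_iff by (simp add: monoid_satisfies_def)

lemma onlyif_a: "\<forall>\<psi>. evN \<psi> u = evN \<psi> v \<Longrightarrow> \<forall>x. min 2 (count_list u x) = min 2 (count_list v x)"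
  using evN_single apow_inj by metis

lemma evA_Z: "\<forall>x\<in>set w. \<phi> x \<noteq> Z \<Longrightarrow> (evA \<phi> w = Z \<longleftrightarrow> pairR (\<lambda>x. isF (\<phi> x)) (\<lambda>x. isE (\<phi> x)) w)"
  by (simp add: evA_closed)

lemma onlyif_b: assumes "\<forall>\<phi>. evA \<phi> u = evA \<phi> v" "set u = set v" "x \<in> set u" "y \<in> set u"
  shows "first_occ u x < last_occ u y \<longleftrightarrow> first_occ v x < last_occ v y"
proof -
  define \<phi> where "\<phi> z = (if z = x \<and> z = y then EF else if z = y then E else if z = x then F else One)" for z
  have F: "(\<lambda>z. isF (\<phi> z)) = (\<lambda>z. z = x)" and E: "(\<lambda>z. isE (\<phi> z)) = (\<lambda>z. z = y)"
    and nz: "\<forall>z. \<phi> z \<noteq> Z" unfolding \<phi>_def isF_def isE_def by auto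
  have key: "evA \<phi> w = Z \<longleftrightarrow> first_occ w x < last_occ w y" if "x \<in> set w" "y \<in> set w" for w
  proof -
    have "evA \<phi> w = Z \<longleftrightarrow> pairR (\<lambda>z. z = x) (\<lambda>z. z = y) w" using evA_Z[of w \<phi>] nz F E by simp
    also have "\<dots> \<longleftrightarrow> first_occ w x < last_occ w y" using pairR_occ[of "\<lambda>z. z = x" "\<lambda>z. z = y" w] that by blast
    finally show ?thesis .
  qed
  have xy: "x \<in> set v" "y \<in> set v" using assms by auto
  have "evA \<phi> u = evA \<phi> v" using assms(1) by blast
  thus ?thesis using key[OF assms(3,4)] key[OF xy] by simp
qed

lemma onlyif_c_word: assumes "count_list w t = 1" "count_list w x \<ge> 2"
  defines "\<psi> \<equiv> (\<lambda>z. if z = t then NT else if z = x then NA else N1)"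
  shows "(evN \<psi> w \<in> {NT, NTA, NTA2} \<longleftrightarrow> first_occ w t < first_occ w x) \<and>
         (evN \<psi> w \<noteq> NZ \<longleftrightarrow> first_occ w t < second_occ w x)"
proof -
  have xt: "x \<noteq> t"
  proof
    assume "x = t" thus False using assms(1,2) by simp
  qed
  have xin: "x \<in> set w" using assms(2) by (metis count_notin not_numeral_le_zero)
  obtain w1 w2 where w: "w = w1 @ t # w2" "t \<notin> set w1" "t \<notin> set w2" using split_simple[OF assms(1)] by blast
  have "evN \<psi> w1 = evN (\<lambda>y. if y = x then NA else N1) w1"
    using w(2) by (intro evN_cong) (auto simp: \<psi>_def)
  hence e1: "evN \<psi> w1 = apow (count_list w1 x)" using evN_single by simp
  have "evN \<psi> w2 = evN (\<lambda>y. if y = x then NA else N1) w2"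
    using w(3) by (intro evN_cong) (auto simp: \<psi>_def)
  hence e2: "evN \<psi> w2 = apow (count_list w2 x)" using evN_single by simp
  have "evN \<psi> w = nmult (apow (count_list w1 x)) (nmult NT (apow (count_list w2 x)))"
    using w e1 e2 by (simp add: evN_app eval_cons \<psi>_def)
  moreover note tableV[of "count_list w1 x" "count_list w2 x"]
  moreover note pos_count0[OF w(1,2) xin xt] pos_count2[OF w(1,2) assms(2) xt]
  ultimately show ?thesis by simp
qed

lemma onlyif_c: assumes "\<forall>\<psi>. evN \<psi> u = evN \<psi> v" "t \<in> simp_letters u" "x \<in> mul_letters u"
  shows "(first_occ u t < first_occ u x \<longleftrightarrow> first_occ v t < first_occ v x) \<and>
         (first_occ u t < second_occ u x \<longleftrightarrow> first_occ v t < second_occ v x)"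
proof -
  have cap: "\<forall>x. min 2 (count_list u x) = min 2 (count_list v x)" using onlyif_a assms(1) by blast
  have cu: "count_list u t = 1" "count_list u x \<ge> 2" using assms(2,3) unfolding simp_letters_def mul_letters_def by auto
  have "min 2 (count_list u t) = min 2 (count_list v t)" "min 2 (count_list u x) = min 2 (count_list v x)"
    using cap by blast+
  hence cv: "count_list v t = 1" "count_list v x \<ge> 2" using cu unfolding min2_iff by simp_all
  define \<psi> where "\<psi> = (\<lambda>z. if z = t then NT else if z = x then NA else N1)"
  have "evN \<psi> u = evN \<psi> v" using assms(1) by blast
  thus ?thesis using onlyif_c_word[OF cu] onlyif_c_word[OF cv] unfolding \<psi>_def by simp
qed

lemma if_A: assumes cap: "\<forall>x. min 2 (count_list u x) = min 2 (count_list v x)"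
  and B: "\<forall>x\<in>set u. \<forall>y\<in>set u. first_occ u x < last_occ u y \<longleftrightarrow> first_occ v x < last_occ v y"
  shows "evA \<phi> u = evA \<phi> v"
proof -
  have s: "set u = set v" using cap by (rule cap_set)
  have "pairR (\<lambda>x. isF (\<phi> x)) (\<lambda>x. isE (\<phi> x)) u \<longleftrightarrow> pairR (\<lambda>x. isF (\<phi> x)) (\<lambda>x. isE (\<phi> x)) v"
    unfolding pairR_occ using B s by auto
  thus ?thesis unfolding evA_closed using s by simp
qed

lemma if_N: assumes cap: "\<forall>x. min 2 (count_list u x) = min 2 (count_list v x)"
  and B: "\<forall>x\<in>set u. \<forall>y\<in>set u. first_occ u x < last_occ u y \<longleftrightarrow> first_occ v x < last_occ v y"
  and C: "\<forall>t\<in>simp_letters u. \<forall>x\<in>mul_letters u.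
       (first_occ u t < first_occ u x \<longleftrightarrow> first_occ v t < first_occ v x) \<and>
       (first_occ u t < second_occ u x \<longleftrightarrow> first_occ v t < second_occ v x)"
  shows "evN \<psi> u = evN \<psi> v"
proof -
  have s: "set u = set v" using cap by (rule cap_set)
  show ?thesis
  proof (cases "\<exists>x\<in>set u. \<psi> x = NZ")
    case True
    then obtain x where x: "x \<in> set u" "\<psi> x = NZ" by blast
    hence xv: "x \<in> set v" using s by simp
    have "evN \<psi> u = NZ" by (rule evN_Z[where x=x]) (use x in simp_all)
    moreover have "evN \<psi> v = NZ" by (rule evN_Z[where x=x]) (use x xv in simp_all)
    ultimately show ?thesis by simp
  next
    case noZ: False
    show ?thesis
    proof (cases "\<exists>t\<in>set u. isT (\<psi> t)")
      case False
      hence "\<forall>x\<in>set u. \<not> isT (\<psi> x)" by blast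
      thus ?thesis using noT_eq[of u \<psi> v] cap by simp
    next
      case True
      then obtain t where t: "t \<in> set u" "isT (\<psi> t)" by blast
      have tv: "t \<in> set v" using t s by simp
      show ?thesis
      proof (cases "count_list u t \<ge> 2 \<or> (\<exists>r\<in>set u. r \<noteq> t \<and> isT (\<psi> r))")
        case True
        thus ?thesis
        proof
          assume c: "count_list u t \<ge> 2"
          have "min 2 (count_list u t) = min 2 (count_list v t)" using cap by blast
          hence "count_list v t \<ge> 2" using c unfolding min2_iff by simp
          have "evN \<psi> u = NZ" by (rule evN_TT[where x=t and y=t]) (use t c in simp_all)
          moreover have "evN \<psi> v = NZ" by (rule evN_TT[where x=t and y=t]) (use tv t \<open>count_list v t \<ge> 2\<close> in simp_all)
          ultimately show ?thesis by simp
        next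
          assume "\<exists>r\<in>set u. r \<noteq> t \<and> isT (\<psi> r)"
          then obtain r where r: "r \<in> set u" "r \<noteq> t" "isT (\<psi> r)" by blast
          have rv: "r \<in> set v" using r s by simp
          have "evN \<psi> u = NZ" by (rule evN_TT[where x=t and y=r]) (use t r in simp_all)
          moreover have "evN \<psi> v = NZ" by (rule evN_TT[where x=t and y=r]) (use tv rv t r in simp_all)
          ultimately show ?thesis by simp
        qed
      next
        case False
        have "count_list u t \<noteq> 0" using t(1) by (simp add: count_list_0_iff)
        hence cu1: "count_list u t = 1" using False by simp
        have "min 2 (count_list u t) = min 2 (count_list v t)" using cap by blast
        hence cv1: "count_list v t = 1" using cu1 unfolding min2_iff by simp
        have tsimp: "t \<in> simp_letters u" using cu1 unfolding simp_letters_def by simp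
        have uniq: "\<And>r. r \<in> set u \<Longrightarrow> isT (\<psi> r) \<Longrightarrow> r = t" using False by blast
        obtain u1 u2 where u: "u = u1 @ t # u2" "t \<notin> set u1" "t \<notin> set u2"
          using split_simple[OF cu1] by blast
        obtain v1 v2 where v: "v = v1 @ t # v2" "t \<notin> set v1" "t \<notin> set v2"
          using split_simple[OF cv1] by blast
        have good: "\<not> isT (\<psi> y) \<and> \<psi> y \<noteq> NZ" if "y \<in> set u" "y \<noteq> t" for y
          using uniq noZ that by blast
        have su1: "set u1 \<subseteq> set u" "set u2 \<subseteq> set u" using u(1) by auto
        have sv1: "set v1 \<subseteq> set u" "set v2 \<subseteq> set u" using v(1) s by auto
        have g_u1: "\<forall>y\<in>set u1. \<not> isT (\<psi> y) \<and> \<psi> y \<noteq> NZ" using good su1 u(2) by blast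
        have g_u2: "\<forall>y\<in>set u2. \<not> isT (\<psi> y) \<and> \<psi> y \<noteq> NZ" using good su1 u(3) by blast
        have g_v1: "\<forall>y\<in>set v1. \<not> isT (\<psi> y) \<and> \<psi> y \<noteq> NZ" using good sv1 v(2) by blast
        have g_v2: "\<forall>y\<in>set v2. \<not> isT (\<psi> y) \<and> \<psi> y \<noteq> NZ" using good sv1 v(3) by blast
        have cc1: "min 2 (count_list u1 y) = min 2 (count_list v1 y)" for y
        proof -
          have "y \<in> set u \<Longrightarrow> count_list u y \<noteq> 0" by (simp add: count_list_0_iff)
          hence "y = t \<or> y \<notin> set u \<or> (y \<noteq> t \<and> count_list u y = 1) \<or> (y \<noteq> t \<and> count_list u y \<ge> 2)"
            by linarith
          then consider "y = t" | "y \<notin> set u" | "y \<noteq> t" "count_list u y = 1" | "y \<noteq> t" "count_list u y \<ge> 2"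
            by blast
          thus ?thesis
          proof cases
            case 1 thus ?thesis using u(2) v(2) by simp
          next
            case 2
            hence "y \<notin> set u1" "y \<notin> set v1" using su1 sv1 by auto
            thus ?thesis by simp
          next
            case 3
            have yu: "y \<in> set u" using 3 by (metis count_notin zero_neq_one)
            have yv: "y \<in> set v" using yu s by simp
            have "min 2 (count_list u y) = min 2 (count_list v y)" using cap by blast
            hence cv: "count_list v y = 1" using 3 unfolding min2_iff by simp
            have le: "count_list u1 y \<le> 1" "count_list v1 y \<le> 1"
              using 3 cv u(1) v(1) by simp_all
            have "count_list u1 y = 0 \<longleftrightarrow> first_occ u t < last_occ u y"
              using pos_count0[OF u(1,2) yu 3(1)] simp_last[OF 3(2)] by simp
            also have "\<dots> \<longleftrightarrow> first_occ v t < last_occ v y" using B t(1) yu by blast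
            also have "\<dots> \<longleftrightarrow> count_list v1 y = 0"
              using pos_count0[OF v(1,2) yv 3(1)] simp_last[OF cv] by simp
            finally have "count_list u1 y = 0 \<longleftrightarrow> count_list v1 y = 0" .
            hence "count_list u1 y = count_list v1 y" using le by linarith
            thus ?thesis by simp
          next
            case 4
            have yu: "y \<in> set u" using 4 by (metis count_notin not_numeral_le_zero)
            have yv: "y \<in> set v" using yu s by simp
            have "min 2 (count_list u y) = min 2 (count_list v y)" using cap by blast
            hence cv: "count_list v y \<ge> 2" using 4 unfolding min2_iff by simp
            have ymul: "y \<in> mul_letters u" using 4 unfolding mul_letters_def by simp
            have Cy: "(first_occ u t < first_occ u y \<longleftrightarrow> first_occ v t < first_occ v y) \<and>
                  (first_occ u t < second_occ u y \<longleftrightarrow> first_occ v t < second_occ v y)"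
              using C tsimp ymul by blast
            have e0: "count_list u1 y = 0 \<longleftrightarrow> count_list v1 y = 0"
              using pos_count0[OF u(1,2) yu 4(1)] pos_count0[OF v(1,2) yv 4(1)] Cy by simp
            have e2: "count_list u1 y \<ge> 2 \<longleftrightarrow> count_list v1 y \<ge> 2"
              using pos_count2[OF u(1,2) 4(2) 4(1)] pos_count2[OF v(1,2) cv 4(1)] Cy by simp
            show ?thesis
              by (cases "count_list u1 y" rule: nat3_cases; cases "count_list v1 y" rule: nat3_cases)
                 (use e0 e2 in simp_all)
          qed
        qed
        have "\<forall>y\<in>set u1. \<not> isT (\<psi> y)" using g_u1 by blast
        hence E1: "evN \<psi> u1 = evN \<psi> v1" using noT_eq[of u1 \<psi> v1] cc1 by blast
        have eu: "evN \<psi> u = nmult (evN \<psi> u1) (nmult (\<psi> t) (evN \<psi> u2))"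
          using u(1) by (simp add: evN_app eval_cons)
        have ev: "evN \<psi> v = nmult (evN \<psi> v1) (nmult (\<psi> t) (evN \<psi> v2))"
          using v(1) by (simp add: evN_app eval_cons)
        have s2: "set u2 = set v2"
        proof (intro set_eqI)
          fix y
          show "y \<in> set u2 \<longleftrightarrow> y \<in> set v2"
          proof (cases "y \<in> set u")
            case True
            hence yv: "y \<in> set v" using s by simp
            have "y \<in> set u2 \<longleftrightarrow> first_occ u t < last_occ u y" using pos_u2[OF u(1,2) True] .
            also have "\<dots> \<longleftrightarrow> first_occ v t < last_occ v y" using B t(1) True by blast
            also have "\<dots> \<longleftrightarrow> y \<in> set v2" using pos_u2[OF v(1,2) yv] by simp
            finally show ?thesis .
          next
            case False thus ?thesis using su1 sv1 by auto
          qed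
        qed
        from noTZ_val(1)[OF g_u1] consider "evN \<psi> u1 = N1" | "evN \<psi> u1 = NA" | "evN \<psi> u1 = NA2" by blast
        thus ?thesis
        proof cases
          case 1
          hence "evN \<psi> u2 = evN \<psi> (u1 @ u2)" by (simp add: evN_app)
          moreover have "evN \<psi> v2 = evN \<psi> (v1 @ v2)" using 1 E1 by (simp add: evN_app)
          moreover have "evN \<psi> (u1 @ u2) = evN \<psi> (v1 @ v2)"
          proof (rule noT_eq)
            show "\<forall>x\<in>set (u1 @ u2). \<not> isT (\<psi> x)" using g_u1 g_u2 by auto
            show "\<forall>x. min 2 (count_list (u1 @ u2) x) = min 2 (count_list (v1 @ v2) x)"
            proof
              fix x
              show "min 2 (count_list (u1 @ u2) x) = min 2 (count_list (v1 @ v2) x)"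
              proof (cases "x = t")
                case True thus ?thesis using u(2,3) v(2,3) by simp
              next
                case False
                have "count_list (u1 @ u2) x = count_list u x" "count_list (v1 @ v2) x = count_list v x"
                  using u(1) v(1) False by simp_all
                thus ?thesis using cap by simp
              qed
            qed
          qed
          ultimately show ?thesis using eu ev 1 E1 by simp
        next
          case 2
          have n2: "evN \<psi> u2 \<in> {N1, NA, NA2}" "evN \<psi> v2 \<in> {N1, NA, NA2}"
            using noTZ_val(1)[OF g_u2] noTZ_val(1)[OF g_v2] by auto
          have "evN \<psi> u2 = N1 \<longleftrightarrow> evN \<psi> v2 = N1"
            using noTZ_val(2)[OF g_u2] noTZ_val(2)[OF g_v2] s2 by simp
          hence "nmult NA (nmult (\<psi> t) (evN \<psi> u2)) = nmult NA (nmult (\<psi> t) (evN \<psi> v2))"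
            using n2 tableA[OF t(2)] by auto
          thus ?thesis using eu ev 2 E1 by simp
        next
          case 3
          thus ?thesis using eu ev E1 tableA2[OF t(2)] by simp
        qed
      qed
    qed
  qed
qed

theorem lemma6p2:
  fixes u v :: word
  shows "join_A01_Mata_satisfies u v \<longleftrightarrow>
    (simp_letters u = simp_letters v \<and> mul_letters u = mul_letters v) \<and>
    (\<forall>x\<in>set u. \<forall>y\<in>set u.
       first_occ u x < last_occ u y \<longleftrightarrow> first_occ v x < last_occ v y) \<and>
    (\<forall>t\<in>simp_letters u. \<forall>x\<in>mul_letters u.
       (first_occ u t < first_occ u x \<longleftrightarrow> first_occ v t < first_occ v x) \<and>
       (first_occ u t < second_occ u x \<longleftrightarrow> first_occ v t < second_occ v x))"
proof
  assume J: "join_A01_Mata_satisfies u v"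
  hence JA: "\<forall>\<phi>. evA \<phi> u = evA \<phi> v" and JN: "\<forall>\<psi>. evN \<psi> u = evN \<psi> v" using join_iff by blast+
  have cap: "\<forall>x. min 2 (count_list u x) = min 2 (count_list v x)" using onlyif_a[OF JN] .
  have s: "set u = set v" using cap by (rule cap_set)
  have a: "simp_letters u = simp_letters v \<and> mul_letters u = mul_letters v" using cap capA by blast
  have b: "\<forall>x\<in>set u. \<forall>y\<in>set u. first_occ u x < last_occ u y \<longleftrightarrow> first_occ v x < last_occ v y"
    using onlyif_b[OF JA s] by blast
  have c: "\<forall>t\<in>simp_letters u. \<forall>x\<in>mul_letters u.
       (first_occ u t < first_occ u x \<longleftrightarrow> first_occ v t < first_occ v x) \<and>
       (first_occ u t < second_occ u x \<longleftrightarrow> first_occ v t < second_occ v x)"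
    using onlyif_c[OF JN] by blast
  show "(simp_letters u = simp_letters v \<and> mul_letters u = mul_letters v) \<and>
    (\<forall>x\<in>set u. \<forall>y\<in>set u.
       first_occ u x < last_occ u y \<longleftrightarrow> first_occ v x < last_occ v y) \<and>
    (\<forall>t\<in>simp_letters u. \<forall>x\<in>mul_letters u.
       (first_occ u t < first_occ u x \<longleftrightarrow> first_occ v t < first_occ v x) \<and>
       (first_occ u t < second_occ u x \<longleftrightarrow> first_occ v t < second_occ v x))"
    using a b c by blast
next
  assume H: "(simp_letters u = simp_letters v \<and> mul_letters u = mul_letters v) \<and>
    (\<forall>x\<in>set u. \<forall>y\<in>set u.
       first_occ u x < last_occ u y \<longleftrightarrow> first_occ v x < last_occ v y) \<and>
    (\<forall>t\<in>simp_letters u. \<forall>x\<in>mul_letters u.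
       (first_occ u t < first_occ u x \<longleftrightarrow> first_occ v t < first_occ v x) \<and>
       (first_occ u t < second_occ u x \<longleftrightarrow> first_occ v t < second_occ v x))"
  have cap: "\<forall>x. min 2 (count_list u x) = min 2 (count_list v x)" using H capA by blast
  have "\<forall>\<phi>. evA \<phi> u = evA \<phi> v" using if_A[OF cap] H by blast
  moreover have "\<forall>\<psi>. evN \<psi> u = evN \<psi> v" using if_N[OF cap] H by blast
  ultimately show "join_A01_Mata_satisfies u v" using join_iff by blast
qed

end
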